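(* Let $r\ge 1$ and let $M$ be a multigraph with $n$ nodes and at most $n-\frac{n}{r}$ edges. Then $M$ has a connected component with $k$ nodes and exactly $k-1$ edges for some $k$ with $1\le k\le r$. *)

theory Defs
  imports Complex_Main "HOL-Library.Multiset"
begin

text \<open>A finite multigraph: a finite node set V and a finite multiset E of edges,
  each edge given by its two endpoints (an edge (u,w) is undirected; loops allowed).\<close>
definition multigraph :: "'v set \<Rightarrow> ('v \<times> 'v) multiset \<Rightarrow> bool" where
  "multigraph V E \<longleftrightarrow> finite V \<and> (\<forall>e\<in>#E. fst e \<in> V \<and> snd e \<in> V)"

definition adj :: "('v \<times> 'v) multiset \<Rightarrow> 'v \<Rightarrow> 'v \<Rightarrow> bool" where
  "adj E u w \<longleftrightarrow> (u, w) \<in># E \<or> (w, u) \<in># E"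

definition reachable :: "('v \<times> 'v) multiset \<Rightarrow> 'v \<Rightarrow> 'v \<Rightarrow> bool" where
  "reachable E u w \<longleftrightarrow> (u, w) \<in> {(a, b). adj E a b}\<^sup>*"

definition is_component :: "'v set \<Rightarrow> ('v \<times> 'v) multiset \<Rightarrow> 'v set \<Rightarrow> bool" where
  "is_component V E C \<longleftrightarrow> (\<exists>v\<in>V. C = {w. reachable E v w})"

definition comp_edges :: "('v \<times> 'v) multiset \<Rightarrow> 'v set \<Rightarrow> ('v \<times> 'v) multiset" where
  "comp_edges E C = filter_mset (\<lambda>e. fst e \<in> C \<and> snd e \<in> C) E"

end

theory Submission
  imports Defs
begin

lemma card_set_mset_le_size: "card (set_mset M) \<le> size M"
  by (induction M) (auto simp: card_insert_if)

lemma reach_sym: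
  assumes "reachable E u w" shows "reachable E w u"
proof -
  have "(u, w) \<in> {(a, b). adj E a b}\<^sup>*" using assms by (simp add: reachable_def)
  then have "(w, u) \<in> {(a, b). adj E a b}\<^sup>*"
  proof (induction rule: rtrancl_induct)
    case base then show ?case by simp
  next
    case (step y z)
    have "(z, y) \<in> {(a, b). adj E a b}" using step(2) by (auto simp: adj_def)
    then show ?case using step(3) by (meson converse_rtrancl_into_rtrancl)
  qed
  then show ?thesis by (simp add: reachable_def)
qed

lemma reach_trans:
  "reachable E u w \<Longrightarrow> reachable E w x \<Longrightarrow> reachable E u x"
  unfolding reachable_def by (meson rtrancl_trans)

lemma reach_in_V:
  assumes "multigraph V E" "v \<in> V" "reachable E v w" shows "w \<in> V"
proof -
  have "(v, w) \<in> {(a, b). adj E a b}\<^sup>*" using assms by (simp add: reachable_def)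
  then show ?thesis
  proof (induction rule: rtrancl_induct)
    case base then show ?case using assms by simp
  next
    case (step y z)
    have "adj E y z" using step(2) by simp
    then show ?case using assms(1) unfolding multigraph_def adj_def by (metis fst_conv snd_conv)
  qed
qed

lemma class_eq:
  assumes "reachable E v x" shows "{w. reachable E v w} = {w. reachable E x w}"
proof (intro set_eqI iffI; simp)
  fix w assume "reachable E v w"
  then show "reachable E x w" using reach_trans[OF reach_sym[OF assms]] by simp
next
  fix w assume "reachable E x w"
  then show "reachable E v w" using reach_trans[OF assms] by simp
qed

lemma comp_edges_ge:
  assumes fin: "finite C" and Cdef: "C = {w. reachable E v w}"
  shows "card C - 1 \<le> size (comp_edges E C)"
proof -
  define R where "R = {(a, b). adj E a b}"
  have reachR: "reachable E a b \<longleftrightarrow> (\<exists>n. (a, b) \<in> R ^^ n)" for a b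
    unfolding reachable_def R_def by (simp add: rtrancl_power)
  define d where "d w = (LEAST n. (v, w) \<in> R ^^ n)" for w
  have vC: "v \<in> C" using Cdef by (simp add: reachable_def)
  have key: "\<exists>e. e \<in> set_mset (comp_edges E C) \<and> (\<exists>u. {fst e, snd e} = {w, u} \<and> d u + 1 = d w)"
    if w: "w \<in> C - {v}" for w
  proof -
    obtain n where n: "(v, w) \<in> R ^^ n" using w Cdef reachR by auto
    have dw: "(v, w) \<in> R ^^ d w" unfolding d_def using n by (rule LeastI)
    have "d w \<noteq> 0"
    proof
      assume "d w = 0"
      then have "(v, w) \<in> R ^^ 0" using dw by simp
      then show False using w by simp
    qed
    then obtain m where m: "d w = Suc m" using not0_implies_Suc by blast
    obtain u where u1: "(v, u) \<in> R ^^ m" and u2: "(u, w) \<in> R"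
      using dw m by (auto elim: relpow_Suc_E)
    have "d u \<le> m" unfolding d_def using u1 by (rule Least_le)
    moreover have "m \<le> d u"
    proof -
      have du: "(v, u) \<in> R ^^ d u" unfolding d_def using u1 by (rule LeastI)
      then have "(v, w) \<in> R ^^ Suc (d u)" using u2 by auto
      then have "d w \<le> Suc (d u)" unfolding d_def by (rule Least_le)
      then show ?thesis using m by simp
    qed
    ultimately have dd: "d u + 1 = d w" using m by simp
    have uC: "u \<in> C" using u1 Cdef reachR by auto
    have wC: "w \<in> C" using w by simp
    have "adj E u w" using u2 R_def by simp
    then show ?thesis
    proof (unfold adj_def, elim disjE)
      assume "(u, w) \<in># E"
      then have "(u, w) \<in> set_mset (comp_edges E C)" using uC wC by (simp add: comp_edges_def)
      then show ?thesis using dd by (intro exI[of _ "(u, w)"]) auto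
    next
      assume "(w, u) \<in># E"
      then have "(w, u) \<in> set_mset (comp_edges E C)" using uC wC by (simp add: comp_edges_def)
      then show ?thesis using dd by (intro exI[of _ "(w, u)"]) auto
    qed
  qed
  then obtain f where f: "\<And>w. w \<in> C - {v} \<Longrightarrow> f w \<in> set_mset (comp_edges E C) \<and>
      (\<exists>u. {fst (f w), snd (f w)} = {w, u} \<and> d u + 1 = d w)"
    by metis
  have inj: "inj_on f (C - {v})"
  proof (rule inj_onI, rule ccontr)
    fix w1 w2 assume w1: "w1 \<in> C - {v}" and w2: "w2 \<in> C - {v}" and eq: "f w1 = f w2" and ne: "w1 \<noteq> w2"
    obtain u1 where u1: "{fst (f w1), snd (f w1)} = {w1, u1}" "d u1 + 1 = d w1" using f[OF w1] by blast
    obtain u2 where u2: "{fst (f w2), snd (f w2)} = {w2, u2}" "d u2 + 1 = d w2" using f[OF w2] by blast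
    have "{w1, u1} = {w2, u2}" using u1 u2 eq by simp
    then have "w1 = u2 \<and> u1 = w2" using ne by (auto simp: doubleton_eq_iff)
    then show False using u1 u2 by simp
  qed
  have "card (C - {v}) \<le> card (set_mset (comp_edges E C))"
    using card_inj_on_le[OF inj] f by blast
  also have "\<dots> \<le> size (comp_edges E C)" by (rule card_set_mset_le_size)
  finally show ?thesis using vC fin by simp
qed

lemma size_split:
  assumes "finite S" "\<And>e. e \<in># F \<Longrightarrow> \<exists>!C. C \<in> S \<and> fst e \<in> C \<and> snd e \<in> C"
  shows "size F = (\<Sum>C\<in>S. size (comp_edges F C))"
  using assms(2)
proof (induction F)
  case empty then show ?case by (simp add: comp_edges_def)
next
  case (add x F)
  have IH: "size F = (\<Sum>C\<in>S. size (comp_edges F C))" using add by auto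
  have ex1: "\<exists>!C. C \<in> S \<and> fst x \<in> C \<and> snd x \<in> C" using add.prems by simp
  then obtain C0 where C0: "C0 \<in> S" "fst x \<in> C0" "snd x \<in> C0" by blast
  have iff: "(fst x \<in> C \<and> snd x \<in> C) \<longleftrightarrow> C = C0" if "C \<in> S" for C
    using ex1 C0 that by blast
  have "(\<Sum>C\<in>S. size (comp_edges (add_mset x F) C)) =
        (\<Sum>C\<in>S. size (comp_edges F C) + (if C = C0 then 1 else 0))"
  proof (rule sum.cong[OF refl])
    fix C assume "C \<in> S"
    then show "size (comp_edges (add_mset x F) C) = size (comp_edges F C) + (if C = C0 then 1 else 0)"
      using iff[of C] unfolding comp_edges_def by (simp only: filter_mset_add_mset) simp
  qed
  also have "\<dots> = (\<Sum>C\<in>S. size (comp_edges F C)) + 1"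
    using assms(1) C0(1) by (simp add: sum.distrib)
  finally show ?case using IH by simp
qed

theorem lemma10:
  fixes V :: "'v set" and E :: "('v \<times> 'v) multiset" and r :: real
  assumes "multigraph V E"
    and "V \<noteq> {}"
    and "r \<ge> 1"
    and "real (size E) \<le> real (card V) - real (card V) / r"
  shows "\<exists>C k. is_component V E C \<and> card C = k \<and> size (comp_edges E C) = k - 1
               \<and> 1 \<le> k \<and> real k \<le> r"
proof (rule ccontr)
  assume contra: "\<not> ?thesis"
  define S where "S = {C. is_component V E C}"
  have finV: "finite V" using assms(1) by (simp add: multigraph_def)
  have S_img: "S = (\<lambda>v. {w. reachable E v w}) ` V" unfolding S_def is_component_def by auto
  have finS: "finite S" using S_img finV by simp
  have Ssub: "C \<subseteq> V" if "C \<in> S" for C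
    using that S_img reach_in_V[OF assms(1)] by auto
  have finC: "finite C" if "C \<in> S" for C using Ssub[OF that] finV finite_subset by blast
  have UnS: "\<Union>S = V"
  proof
    show "\<Union>S \<subseteq> V" using Ssub by blast
    show "V \<subseteq> \<Union>S" using S_img by (auto simp: reachable_def)
  qed
  have disj: "C = C'" if h: "C \<in> S" "C' \<in> S" "x \<in> C" "x \<in> C'" for C C' x
  proof -
    obtain v where "C = {w. reachable E v w}" using h(1) S_img by auto
    moreover obtain v' where "C' = {w. reachable E v' w}" using h(2) S_img by auto
    ultimately show ?thesis using h class_eq by (metis mem_Collect_eq)
  qed
  have cardV: "card V = (\<Sum>C\<in>S. card C)"
  proof -
    have "pairwise disjnt S" unfolding pairwise_def disjnt_def using disj by blast
    then show ?thesis using card_Union_disjoint[of S] finC UnS by simp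
  qed
  have sizeE: "size E = (\<Sum>C\<in>S. size (comp_edges E C))"
  proof (rule size_split[OF finS])
    fix e assume e: "e \<in># E"
    have fV: "fst e \<in> V" using e assms(1) by (simp add: multigraph_def)
    let ?C = "{w. reachable E (fst e) w}"
    have "?C \<in> S" using S_img fV by auto
    moreover have "fst e \<in> ?C" by (simp add: reachable_def)
    moreover have "snd e \<in> ?C"
    proof -
      have "adj E (fst e) (snd e)" using e by (simp add: adj_def)
      then show ?thesis by (auto simp: reachable_def)
    qed
    ultimately show "\<exists>!C. C \<in> S \<and> fst e \<in> C \<and> snd e \<in> C" using disj by blast
  qed
  have rpos: "r > 0" using assms(3) by simp
  have strict: "real (card C) - real (card C) / r < real (size (comp_edges E C))" if C: "C \<in> S" for C
  proof -
    obtain v where Cv: "C = {w. reachable E v w}" using C S_img by auto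
    have vC: "v \<in> C" using Cv by (simp add: reachable_def)
    have c1: "card C \<ge> 1" using vC finC[OF C] by (metis One_nat_def Suc_leI card_gt_0_iff empty_iff)
    have ge: "card C - 1 \<le> size (comp_edges E C)" by (rule comp_edges_ge[OF finC[OF C] Cv])
    show ?thesis
    proof (cases "real (card C) \<le> r")
      case True
      have "size (comp_edges E C) \<noteq> card C - 1"
        using contra C True c1 unfolding S_def by blast
      then have "card C \<le> size (comp_edges E C)" using ge by simp
      moreover have "real (card C) / r > 0" using c1 rpos by simp
      ultimately show ?thesis by linarith
    next
      case False
      have "real (card C) / r > 1" using False rpos by simp
      moreover have "real (card C) - 1 \<le> real (size (comp_edges E C))" using ge c1 by linarith
      ultimately show ?thesis by linarith
    qed
  qed
  have Sne: "S \<noteq> {}" using UnS assms(2) by auto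
  have "(\<Sum>C\<in>S. real (card C) - real (card C) / r) < (\<Sum>C\<in>S. real (size (comp_edges E C)))"
    by (rule sum_strict_mono[OF finS Sne strict])
  also have "\<dots> = real (size E)" using sizeE by simp
  finally have "real (card V) - real (card V) / r < real (size E)"
    using cardV by (simp add: sum_subtractf sum_divide_distrib)
  then show False using assms(4) by simp
qed

end
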